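(* Let $f(x)=\frac1n\sum_{i=1}^n f_i(x)$ where each $f_i:\mathbb{R}^d\to\mathbb{R}$ is differentiable and $\mu_i$-strongly convex with $\mu_i>0$, and let $x_\star$ be the minimizer of $f$. Let $\mathcal{S}$ be a probability distribution over subsets of $[n]$, let $S\sim\mathcal{S}$, $p_i:=\Pr(i\in S)$ and $p_C:=\Pr(S=C)$, and assume $S$ is proper ($p_i>0$ for all $i$) and nonvacuous ($\Pr(S=\varnothing)=0$). For $C\subseteq[n]$ let $f_C(x):=\sum_{i\in C}\frac{1}{np_i}f_i(x)$, and define $$\mu_{\rm AS}:=\min_{C\subseteq[n],\,p_C>0}\sum_{i\in C}\frac{\mu_i}{np_i},\qquad \sigma_{\star,\rm AS}^2:=\sum_{C\subseteq[n],\,p_C>0}p_C\Big\|\sum_{i\in C}\frac{1}{np_i}\nabla f_i(x_\star)\Big\|^2.$$ Consider SPPM-AS: from arbitrary $x_0\in\mathbb{R}^d$, at each step sample $S_k\sim\mathcal{S}$ independently of the past and set $x_{k+1}=\operatorname{prox}_{\gamma f_{S_k}}(x_k)$. Then for any $\gamma>0$ and $k\ge0$, $$\mathbb{E}\|x_k-x_\star\|^2\le\left(\frac{1}{1+\gamma\mu_{\rm AS}}\right)^{2k}\|x_0-x_\star\|^2+\frac{\gamma\sigma_{\star,\rm AS}^2}{\gamma\mu_{\rm AS}^2+2\mu_{\rm AS}}.$$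
   Context: $\operatorname{prox}_{\gamma\phi}(y):=\arg\min_{x\in\mathbb{R}^d}\{\phi(x)+\frac{1}{2\gamma}\|x-y\|^2\}$. $\mu$-strong convexity of $g$: $g(y)+\langle\nabla g(y),x-y\rangle+\frac{\mu}{2}\|x-y\|^2\le g(x)$ for all $x,y$. *)

theory Defs
  imports "HOL-Analysis.Analysis" "HOL-Probability.Probability"
begin

definition prox :: "real \<Rightarrow> ('a::real_normed_vector \<Rightarrow> real) \<Rightarrow> 'a \<Rightarrow> 'a" where
  "prox \<gamma> \<phi> y = (THE x. \<forall>z. \<phi> x + (1 / (2 * \<gamma>)) * (norm (x - y))\<^sup>2
                               \<le> \<phi> z + (1 / (2 * \<gamma>)) * (norm (z - y))\<^sup>2)"

definition strongly_convex_grad :: "real \<Rightarrow> ('a::real_inner \<Rightarrow> real) \<Rightarrow> ('a \<Rightarrow> 'a) \<Rightarrow> bool" where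
  "strongly_convex_grad \<mu> g dg \<longleftrightarrow>
     (\<forall>x y. g y + inner (dg y) (x - y) + (\<mu> / 2) * (norm (x - y))\<^sup>2 \<le> g x)"

definition fC :: "nat \<Rightarrow> (nat \<Rightarrow> real) \<Rightarrow> (nat \<Rightarrow> 'a \<Rightarrow> real) \<Rightarrow> nat set \<Rightarrow> 'a \<Rightarrow> real" where
  "fC n p f C x = (\<Sum>i\<in>C. f i x / (real n * p i))"

text \<open>Distribution of the SPPM-AS iterate x_k: x_{k+1} = prox_{gamma f_{S_k}}(x_k),
  with S_k drawn from S independently of the past.\<close>
primrec sppm_as :: "nat \<Rightarrow> (nat \<Rightarrow> real) \<Rightarrow> (nat \<Rightarrow> 'a::real_normed_vector \<Rightarrow> real)
     \<Rightarrow> nat set pmf \<Rightarrow> real \<Rightarrow> 'a \<Rightarrow> nat \<Rightarrow> 'a pmf" where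
  "sppm_as n p f S \<gamma> x0 0 = return_pmf x0"
| "sppm_as n p f S \<gamma> x0 (Suc k) =
     bind_pmf (sppm_as n p f S \<gamma> x0 k) (\<lambda>x. map_pmf (\<lambda>C. prox \<gamma> (fC n p f C) x) S)"

end

theory Submission imports Defs begin

lemma prox_opt:
  fixes \<phi> :: "'a::euclidean_space \<Rightarrow> real" and g :: "'a \<Rightarrow> 'a"
  assumes deriv: "\<And>x. (\<phi> has_derivative (\<lambda>h. inner (g x) h)) (at x)"
    and mono: "\<And>x y. inner (g x - g y) (x - y) \<ge> 0"
    and cvx: "\<And>x z. \<phi> x + inner (g x) (z - x) \<le> \<phi> z"
    and gp: "\<gamma> > 0"
  shows "prox \<gamma> \<phi> x + \<gamma> *\<^sub>R g (prox \<gamma> \<phi> x) = x"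
proof -
  define h where "h z = \<phi> z + (1 / (2 * \<gamma>)) * (norm (z - x))\<^sup>2" for z
  have opt: "z + \<gamma> *\<^sub>R g z = x" if min: "\<forall>w. h z \<le> h w" for z
  proof -
    have hd: "(h has_derivative (\<lambda>v. inner (g z) v + (1 / (2 * \<gamma>)) * (inner v (z - x) + inner (z - x) v))) (at z)"
      unfolding h_def power2_norm_eq_inner
      by (intro derivative_eq_intros) (auto simp: deriv)
    have "(\<lambda>v. inner (g z) v + (1 / (2 * \<gamma>)) * (inner v (z - x) + inner (z - x) v)) = (\<lambda>v. 0)"
      by (rule has_derivative_local_min[OF hd]) (use min in auto)
    hence L: "\<And>v. inner (g z) v + (1 / (2 * \<gamma>)) * (inner v (z - x) + inner (z - x) v) = 0"
      by (metis)
    define v where "v = g z + (1 / \<gamma>) *\<^sub>R (z - x)"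
    have "inner v v = inner (g z) v + (1 / (2 * \<gamma>)) * (inner v (z - x) + inner (z - x) v)"
    proof -
      have "inner v v = inner (g z) v + (1 / \<gamma>) * inner (z - x) v"
        by (subst (1) v_def) (simp add: inner_add_left)
      moreover have "inner v (z - x) = inner (z - x) v" by (rule inner_commute)
      ultimately show ?thesis by simp
    qed
    hence "inner v v = 0" using L by simp
    hence "v = 0" by simp
    hence "\<gamma> *\<^sub>R v = 0" by simp
    thus ?thesis using gp unfolding v_def by (simp add: scaleR_add_right algebra_simps)
  qed
  have ex: "\<exists>z. \<forall>w. h z \<le> h w"
  proof -
    define R where "R = 2 * \<gamma> * norm (g x) + 1"
    have Rpos: "R > 0" using gp unfolding R_def by (simp add: add_nonneg_pos)
    have cont: "continuous_on (cball x R) h"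
    proof -
      have "continuous_on (cball x R) \<phi>"
        by (rule continuous_at_imp_continuous_on) (use has_derivative_continuous[OF deriv] in auto)
      thus ?thesis unfolding h_def by (intro continuous_intros)
    qed
    obtain z where zin: "z \<in> cball x R" and zmin: "\<forall>w\<in>cball x R. h z \<le> h w"
      using continuous_attains_inf[OF compact_cball _ cont] Rpos by auto
    have "h z \<le> h w" for w
    proof (cases "w \<in> cball x R")
      case True then show ?thesis using zmin by auto
    next
      case False
      define d where "d = norm (w - x)"
      have dR: "d > R" using False unfolding d_def by (simp add: dist_norm norm_minus_commute)
      have "h x = \<phi> x" unfolding h_def by simp
      have c1: "\<phi> x + inner (g x) (w - x) \<le> \<phi> w" by (rule cvx)
      have c2: "inner (g x) (w - x) \<ge> - (norm (g x) * d)"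
        unfolding d_def using Cauchy_Schwarz_ineq2[of "g x" "w - x"] by linarith
      have c3: "d * (d / (2 * \<gamma>) - norm (g x)) > 0"
      proof -
        have "d / (2 * \<gamma>) > norm (g x)" using dR gp unfolding R_def by (simp add: field_simps)
        thus ?thesis using dR Rpos by simp
      qed
      have "h w = \<phi> w + d * d / (2 * \<gamma>)" unfolding h_def d_def by (simp add: power2_eq_square)
      also have "\<dots> > \<phi> x" using c1 c2 c3 by (simp add: algebra_simps)
      finally have "h w > h x" using \<open>h x = \<phi> x\<close> by simp
      moreover have "h z \<le> h x" using zmin Rpos by simp
      ultimately show ?thesis by simp
    qed
    thus ?thesis by blast
  qed
  have uniq: "z1 = z2" if "\<forall>w. h z1 \<le> h w" "\<forall>w. h z2 \<le> h w" for z1 z2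
  proof -
    have e1: "z1 + \<gamma> *\<^sub>R g z1 = x" and e2: "z2 + \<gamma> *\<^sub>R g z2 = x" using opt that by auto
    have "(z1 - z2) + \<gamma> *\<^sub>R (g z1 - g z2) = 0" using e1 e2 by (simp add: algebra_simps)
    hence "inner ((z1 - z2) + \<gamma> *\<^sub>R (g z1 - g z2)) (z1 - z2) = 0" by simp
    hence "inner (z1 - z2) (z1 - z2) + \<gamma> * inner (g z1 - g z2) (z1 - z2) = 0"
      by (simp add: inner_add_left)
    moreover have "\<gamma> * inner (g z1 - g z2) (z1 - z2) \<ge> 0" using mono gp by simp
    moreover have "inner (z1 - z2) (z1 - z2) \<ge> 0" by simp
    ultimately have "inner (z1 - z2) (z1 - z2) = 0" by linarith
    thus ?thesis by simp
  qed
  have "\<exists>!z. \<forall>w. h z \<le> h w" using ex uniq by blast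
  hence "\<forall>w. h (prox \<gamma> \<phi> x) \<le> h w"
    unfolding prox_def h_def[symmetric] by (rule theI')
  thus ?thesis by (rule opt)
qed

lemma contr:
  fixes a b :: "'a::real_inner"
  assumes ba: "inner b a \<ge> m * (norm a)\<^sup>2" and m: "m \<ge> 0" and gm: "\<gamma> \<ge> 0"
  shows "(1 + \<gamma> * m)\<^sup>2 * (norm a)\<^sup>2 \<le> (norm (a + \<gamma> *\<^sub>R b))\<^sup>2"
proof -
  have e: "(norm (a + \<gamma> *\<^sub>R b))\<^sup>2 = (norm a)\<^sup>2 + 2 * \<gamma> * inner b a + \<gamma>\<^sup>2 * (norm b)\<^sup>2"
  proof -
    have "(norm (a + \<gamma> *\<^sub>R b))\<^sup>2 = inner (a + \<gamma> *\<^sub>R b) (a + \<gamma> *\<^sub>R b)" by (rule power2_norm_eq_inner)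
    also have "\<dots> = inner a a + 2 * \<gamma> * inner b a + \<gamma>\<^sup>2 * inner b b"
      by (simp add: inner_add_left inner_add_right inner_commute[of a b] power2_eq_square algebra_simps)
    also have "\<dots> = (norm a)\<^sup>2 + 2 * \<gamma> * inner b a + \<gamma>\<^sup>2 * (norm b)\<^sup>2" by (simp add: power2_norm_eq_inner)
    finally show ?thesis .
  qed
  have nb: "m * norm a \<le> norm b"
  proof (cases "a = 0")
    case True then show ?thesis by simp
  next
    case False
    have "m * norm a * norm a \<le> norm b * norm a"
      using ba Cauchy_Schwarz_ineq2[of b a] by (simp add: power2_eq_square)
    thus ?thesis using False by simp
  qed
  have "(m * norm a)\<^sup>2 \<le> (norm b)\<^sup>2"
    using nb m by (intro power_mono) auto
  hence t2: "\<gamma>\<^sup>2 * (m\<^sup>2 * (norm a)\<^sup>2) \<le> \<gamma>\<^sup>2 * (norm b)\<^sup>2"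
    by (intro mult_left_mono) (auto simp: power_mult_distrib)
  have t1: "2 * \<gamma> * (m * (norm a)\<^sup>2) \<le> 2 * \<gamma> * inner b a"
    using ba gm by (intro mult_left_mono) auto
  have "(1 + \<gamma> * m)\<^sup>2 * (norm a)\<^sup>2 = (norm a)\<^sup>2 + 2 * \<gamma> * (m * (norm a)\<^sup>2) + \<gamma>\<^sup>2 * (m\<^sup>2 * (norm a)\<^sup>2)"
    by (simp add: power2_eq_square algebra_simps)
  also have "\<dots> \<le> (norm (a + \<gamma> *\<^sub>R b))\<^sup>2" using e t1 t2 by linarith
  finally show ?thesis .
qed

lemma fC_facts:
  fixes f :: "nat \<Rightarrow> 'a::euclidean_space \<Rightarrow> real" and df :: "nat \<Rightarrow> 'a \<Rightarrow> 'a"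
  assumes fin: "finite C"
    and pp: "\<And>i. i \<in> C \<Longrightarrow> p i > 0" and n: "n > 0"
    and grad: "\<And>i x. i \<in> C \<Longrightarrow> (f i has_derivative (\<lambda>h. inner (df i x) h)) (at x)"
    and mu_pos: "\<And>i. i \<in> C \<Longrightarrow> \<mu> i > 0"
    and sconv: "\<And>i. i \<in> C \<Longrightarrow> strongly_convex_grad (\<mu> i) (f i) (df i)"
  defines "g \<equiv> (\<lambda>x. \<Sum>i\<in>C. (1 / (real n * p i)) *\<^sub>R df i x)"
  shows "(fC n p f C has_derivative (\<lambda>h. inner (g x) h)) (at x)"
    and "inner (g x - g y) (x - y) \<ge> (\<Sum>i\<in>C. \<mu> i / (real n * p i)) * (norm (x - y))\<^sup>2"
    and "fC n p f C x + inner (g x) (z - x) \<le> fC n p f C z"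
proof -
  have fCe: "fC n p f C = (\<lambda>x. \<Sum>i\<in>C. f i x / (real n * p i))"
    by (rule ext) (simp add: fC_def)
  have ig: "inner (g x) v = (\<Sum>i\<in>C. inner (df i x) v / (real n * p i))" for x v
    unfolding g_def by (simp add: inner_sum_left)
  have cpos: "real n * p i > 0" if "i \<in> C" for i using pp[OF that] n by simp
  show "(fC n p f C has_derivative (\<lambda>h. inner (g x) h)) (at x)"
    unfolding fCe ig
    by (intro derivative_eq_intros has_derivative_sum) (auto simp: grad n dest: pp)
  have mi: "\<mu> i * (norm (x - y))\<^sup>2 \<le> inner (df i x - df i y) (x - y)" if "i \<in> C" for i
  proof -
    have a: "f i y + inner (df i y) (x - y) + (\<mu> i / 2) * (norm (x - y))\<^sup>2 \<le> f i x"
      and b: "f i x + inner (df i x) (y - x) + (\<mu> i / 2) * (norm (y - x))\<^sup>2 \<le> f i y"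
      using sconv[OF that] unfolding strongly_convex_grad_def by blast+
    have "inner (df i x) (y - x) = - inner (df i x) (x - y)" by (simp add: inner_diff_right)
    moreover have "norm (y - x) = norm (x - y)" by (rule norm_minus_commute)
    ultimately show ?thesis using a b by (simp add: inner_diff_left)
  qed
  have "(\<Sum>i\<in>C. \<mu> i / (real n * p i)) * (norm (x - y))\<^sup>2
      = (\<Sum>i\<in>C. (\<mu> i * (norm (x - y))\<^sup>2) / (real n * p i))"
    by (simp add: sum_distrib_right)
  also have "\<dots> \<le> (\<Sum>i\<in>C. inner (df i x - df i y) (x - y) / (real n * p i))"
    by (intro sum_mono divide_right_mono mi) (auto dest: cpos intro: less_imp_le)
  also have "\<dots> = inner (g x - g y) (x - y)"
    by (simp add: inner_diff_left ig sum_subtractf diff_divide_distrib)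
  finally show "inner (g x - g y) (x - y) \<ge> (\<Sum>i\<in>C. \<mu> i / (real n * p i)) * (norm (x - y))\<^sup>2" .
  have ci: "f i x + inner (df i x) (z - x) \<le> f i z" if "i \<in> C" for i
  proof -
    have "f i x + inner (df i x) (z - x) + (\<mu> i / 2) * (norm (z - x))\<^sup>2 \<le> f i z"
      using sconv[OF that] unfolding strongly_convex_grad_def by blast
    moreover have "(\<mu> i / 2) * (norm (z - x))\<^sup>2 \<ge> 0" using mu_pos[OF that] by simp
    ultimately show ?thesis by linarith
  qed
  have "fC n p f C x + inner (g x) (z - x) = (\<Sum>i\<in>C. (f i x + inner (df i x) (z - x)) / (real n * p i))"
    by (simp add: fCe ig sum.distrib add_divide_distrib)
  also have "\<dots> \<le> (\<Sum>i\<in>C. f i z / (real n * p i))"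
    by (intro sum_mono divide_right_mono ci) (auto dest: cpos intro: less_imp_le)
  also have "\<dots> = fC n p f C z" by (simp add: fCe)
  finally show "fC n p f C x + inner (g x) (z - x) \<le> fC n p f C z" .
qed

theorem mainTheorem5:
  fixes n :: nat
    and f :: "nat \<Rightarrow> 'a::euclidean_space \<Rightarrow> real"
    and df :: "nat \<Rightarrow> 'a \<Rightarrow> 'a"
    and \<mu> :: "nat \<Rightarrow> real"
    and xs :: 'a
    and S :: "nat set pmf"
    and \<gamma> :: real and x0 :: 'a and k :: nat
  assumes n_pos: "n \<ge> 1"
    and grad: "\<And>i x. i < n \<Longrightarrow> (f i has_derivative (\<lambda>h. inner (df i x) h)) (at x)"
    and mu_pos: "\<And>i. i < n \<Longrightarrow> \<mu> i > 0"
    and sconv: "\<And>i. i < n \<Longrightarrow> strongly_convex_grad (\<mu> i) (f i) (df i)"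
    and xs_min: "\<And>x. (1 / real n) * (\<Sum>i<n. f i xs) \<le> (1 / real n) * (\<Sum>i<n. f i x)"
    and S_sub: "set_pmf S \<subseteq> Pow {..<n}"
    and proper: "\<And>i. i < n \<Longrightarrow> measure_pmf.prob S {C. i \<in> C} > 0"
    and nonvacuous: "pmf S {} = 0"
    and gamma_pos: "\<gamma> > 0"
  shows
    "let p = (\<lambda>i. measure_pmf.prob S {C. i \<in> C});
         muAS = Min ((\<lambda>C. \<Sum>i\<in>C. \<mu> i / (real n * p i)) ` set_pmf S);
         sigAS = (\<Sum>C\<in>set_pmf S. pmf S C *
                    (norm (\<Sum>i\<in>C. (1 / (real n * p i)) *\<^sub>R df i xs))\<^sup>2)
     in measure_pmf.expectation (sppm_as n p f S \<gamma> x0 k) (\<lambda>x. (norm (x - xs))\<^sup>2)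
        \<le> (1 / (1 + \<gamma> * muAS)) ^ (2 * k) * (norm (x0 - xs))\<^sup>2
          + \<gamma> * sigAS / (\<gamma> * muAS\<^sup>2 + 2 * muAS)"
proof -
  define p where "p = (\<lambda>i. measure_pmf.prob S {C. i \<in> C})"
  define muAS where "muAS = Min ((\<lambda>C. \<Sum>i\<in>C. \<mu> i / (real n * p i)) ` set_pmf S)"
  define sigAS where "sigAS = (\<Sum>C\<in>set_pmf S. pmf S C *
                    (norm (\<Sum>i\<in>C. (1 / (real n * p i)) *\<^sub>R df i xs))\<^sup>2)"
  define g where "g C x = (\<Sum>i\<in>C. (1 / (real n * p i)) *\<^sub>R df i x)" for C x
  define muC where "muC C = (\<Sum>i\<in>C. \<mu> i / (real n * p i))" for C
  define q where "q = (1 / (1 + \<gamma> * muAS))\<^sup>2"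
  define E where "E P = measure_pmf.expectation P (\<lambda>x. (norm (x - xs))\<^sup>2)" for P :: "'a pmf"
  define P where "P k = sppm_as n p f S \<gamma> x0 k" for k
  have n0: "n > 0" using n_pos by simp
  have finS: "finite (set_pmf S)"
    using S_sub by (meson finite_Pow_iff finite_lessThan finite_subset)
  have pp: "i < n \<Longrightarrow> p i > 0" for i unfolding p_def using proper .
  have Csub: "C \<in> set_pmf S \<Longrightarrow> C \<subseteq> {..<n}" for C using S_sub by auto
  have Cne: "C \<in> set_pmf S \<Longrightarrow> C \<noteq> {}" for C using nonvacuous by (auto simp: set_pmf_iff)
  have finC: "C \<in> set_pmf S \<Longrightarrow> finite C" for C using Csub finite_subset by blast
  have muC_pos: "C \<in> set_pmf S \<Longrightarrow> muC C > 0" for C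
    unfolding muC_def
  proof (intro sum_pos)
    assume "C \<in> set_pmf S"
    thus "finite C" "C \<noteq> {}" using finC Cne by auto
    show "\<And>i. i \<in> C \<Longrightarrow> 0 < \<mu> i / (real n * p i)"
      using Csub[OF \<open>C \<in> set_pmf S\<close>] mu_pos pp n0 by (auto intro!: divide_pos_pos)
  qed
  have Sne: "set_pmf S \<noteq> {}" by (simp add: set_pmf_not_empty)
  have muAS_le: "C \<in> set_pmf S \<Longrightarrow> muAS \<le> muC C" for C
    unfolding muAS_def muC_def using finS by (intro Min_le) auto
  have "muAS \<in> (\<lambda>C. \<Sum>i\<in>C. \<mu> i / (real n * p i)) ` set_pmf S"
    unfolding muAS_def using finS Sne by (intro Min_in) auto
  then obtain C0 where "C0 \<in> set_pmf S" "muAS = muC C0" unfolding muC_def by auto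
  hence muAS_pos: "muAS > 0" using muC_pos by simp
  have fCf: "(fC n p f C has_derivative (\<lambda>h. inner (g C x) h)) (at x)"
     "inner (g C x - g C y) (x - y) \<ge> muC C * (norm (x - y))\<^sup>2"
     "fC n p f C x + inner (g C x) (z - x) \<le> fC n p f C z"
    if "C \<in> set_pmf S" for C x y z
  proof -
    have H: "finite C" "\<And>i. i \<in> C \<Longrightarrow> p i > 0" "\<And>i x. i \<in> C \<Longrightarrow> (f i has_derivative (\<lambda>h. inner (df i x) h)) (at x)"
      "\<And>i. i \<in> C \<Longrightarrow> \<mu> i > 0" "\<And>i. i \<in> C \<Longrightarrow> strongly_convex_grad (\<mu> i) (f i) (df i)"
      using finC[OF that] Csub[OF that] pp grad mu_pos sconv by auto
    show "(fC n p f C has_derivative (\<lambda>h. inner (g C x) h)) (at x)"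
      unfolding g_def using fC_facts(1)[OF H(1,2) n0 H(3-5)] by simp
    show "inner (g C x - g C y) (x - y) \<ge> muC C * (norm (x - y))\<^sup>2"
      unfolding g_def muC_def using fC_facts(2)[OF H(1,2) n0 H(3-5)] by simp
    show "fC n p f C x + inner (g C x) (z - x) \<le> fC n p f C z"
      unfolding g_def using fC_facts(3)[OF H(1,2) n0 H(3-5)] by simp
  qed
  have qpos: "q > 0" and qlt: "q < 1"
  proof -
    have "1 + \<gamma> * muAS > 1" using gamma_pos muAS_pos by simp
    thus "q > 0" "q < 1" unfolding q_def by (auto simp: power_less_one_iff divide_less_eq)
  qed
  have step: "(norm (prox \<gamma> (fC n p f C) x - xs))\<^sup>2 \<le> q * (norm ((x - xs) - \<gamma> *\<^sub>R g C xs))\<^sup>2"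
    if CS: "C \<in> set_pmf S" for C x
  proof -
    define z where "z = prox \<gamma> (fC n p f C) x"
    have opt: "z + \<gamma> *\<^sub>R g C z = x" unfolding z_def
    proof (rule prox_opt[OF fCf(1)[OF CS] _ fCf(3)[OF CS] gamma_pos])
      fix x y :: 'a
      have "0 \<le> muC C * (norm (x - y))\<^sup>2" using muC_pos[OF CS] by simp
      thus "0 \<le> inner (g C x - g C y) (x - y)" using fCf(2)[OF CS, of x y] by linarith
    qed
    have "muAS * (norm (z - xs))\<^sup>2 \<le> muC C * (norm (z - xs))\<^sup>2"
      using muAS_le[OF CS] by (intro mult_right_mono) auto
    hence ba: "inner (g C z - g C xs) (z - xs) \<ge> muAS * (norm (z - xs))\<^sup>2"
      using fCf(2)[OF CS, of z xs] by linarith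
    have c: "(1 + \<gamma> * muAS)\<^sup>2 * (norm (z - xs))\<^sup>2 \<le> (norm ((z - xs) + \<gamma> *\<^sub>R (g C z - g C xs)))\<^sup>2"
      by (rule contr[OF ba]) (use muAS_pos gamma_pos in auto)
    have "(z - xs) + \<gamma> *\<^sub>R (g C z - g C xs) = (x - xs) - \<gamma> *\<^sub>R g C xs"
      using opt by (auto simp: algebra_simps)
    with c have c': "(1 + \<gamma> * muAS)\<^sup>2 * (norm (z - xs))\<^sup>2 \<le> (norm ((x - xs) - \<gamma> *\<^sub>R g C xs))\<^sup>2" by simp
    have "1 + \<gamma> * muAS > 0" using muAS_pos gamma_pos by (simp add: add_pos_pos)
    hence pos: "(1 + \<gamma> * muAS)\<^sup>2 > 0" by simp
    have "(norm (z - xs))\<^sup>2 \<le> (norm ((x - xs) - \<gamma> *\<^sub>R g C xs))\<^sup>2 / (1 + \<gamma> * muAS)\<^sup>2"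
      using c' pos by (simp add: pos_le_divide_eq mult.commute)
    thus ?thesis unfolding z_def q_def by (simp add: power_divide)
  qed
  have grad0: "(\<Sum>i<n. df i xs) = 0"
  proof -
    define v where "v = (\<Sum>i<n. df i xs)"
    have hd: "((\<lambda>x. \<Sum>i<n. f i x) has_derivative (\<lambda>h. \<Sum>i<n. inner (df i xs) h)) (at xs)"
      by (intro has_derivative_sum) (auto simp: grad)
    have "(\<Sum>i<n. f i xs) \<le> (\<Sum>i<n. f i x)" for x
      using xs_min[of x] n0 by (simp add: divide_le_cancel)
    hence "(\<lambda>h. \<Sum>i<n. inner (df i xs) h) = (\<lambda>h. 0)"
      by (intro has_derivative_local_min[OF hd]) auto
    hence "(\<Sum>i<n. inner (df i xs) v) = 0" by metis
    moreover have "inner v v = (\<Sum>i<n. inner (df i xs) v)" by (subst (1) v_def) (simp add: inner_sum_left)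
    ultimately have "inner v v = 0" by simp
    thus ?thesis unfolding v_def by simp
  qed
  have pe: "p i = (\<Sum>C\<in>set_pmf S. if i \<in> C then pmf S C else 0)" for i
  proof -
    have "p i = measure_pmf.prob S (set_pmf S \<inter> {C. i \<in> C})"
      unfolding p_def using measure_Int_set_pmf[of S "{C. i \<in> C}"] by (simp add: Int_commute)
    also have "\<dots> = sum (pmf S) (set_pmf S \<inter> {C. i \<in> C})"
      using finS by (intro measure_measure_pmf_finite) auto
    also have "\<dots> = (\<Sum>C\<in>set_pmf S. if i \<in> C then pmf S C else 0)"
      using finS by (simp add: sum.inter_restrict)
    finally show ?thesis .
  qed
  have gsum: "g C x = (\<Sum>i<n. (if i \<in> C then 1 / (real n * p i) else 0) *\<^sub>R df i x)"
    if "C \<in> set_pmf S" for C x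
  proof -
    have "g C x = (\<Sum>i\<in>{..<n} \<inter> C. (1 / (real n * p i)) *\<^sub>R df i x)"
      unfolding g_def using Csub[OF that] by (simp add: Int_absorb1)
    also have "\<dots> = (\<Sum>i<n. (if i \<in> C then 1 / (real n * p i) else 0) *\<^sub>R df i x)"
      by (subst sum.inter_restrict) (auto intro!: sum.cong)
    finally show ?thesis .
  qed
  have Eg0: "(\<Sum>C\<in>set_pmf S. pmf S C *\<^sub>R g C xs) = 0"
  proof -
    have "(\<Sum>C\<in>set_pmf S. pmf S C *\<^sub>R g C xs)
        = (\<Sum>C\<in>set_pmf S. \<Sum>i<n. (pmf S C * (if i \<in> C then 1 / (real n * p i) else 0)) *\<^sub>R df i xs)"
      by (intro sum.cong refl) (simp add: gsum scaleR_sum_right)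
    also have "\<dots> = (\<Sum>i<n. \<Sum>C\<in>set_pmf S. (pmf S C * (if i \<in> C then 1 / (real n * p i) else 0)) *\<^sub>R df i xs)"
      by (rule sum.swap)
    also have "\<dots> = (\<Sum>i<n. (p i * (1 / (real n * p i))) *\<^sub>R df i xs)"
    proof (intro sum.cong refl)
      fix i assume "i \<in> {..<n}"
      have "(\<Sum>C\<in>set_pmf S. (pmf S C * (if i \<in> C then 1 / (real n * p i) else 0)) *\<^sub>R df i xs)
          = (\<Sum>C\<in>set_pmf S. (if i \<in> C then pmf S C else 0) * (1 / (real n * p i))) *\<^sub>R df i xs"
        by (simp add: scaleR_sum_left) (intro sum.cong refl, auto)
      also have "\<dots> = (p i * (1 / (real n * p i))) *\<^sub>R df i xs"
        by (simp only: sum_distrib_right[symmetric] pe[of i, symmetric])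
      finally show "(\<Sum>C\<in>set_pmf S. (pmf S C * (if i \<in> C then 1 / (real n * p i) else 0)) *\<^sub>R df i xs)
          = (p i * (1 / (real n * p i))) *\<^sub>R df i xs" .
    qed
    also have "\<dots> = (\<Sum>i<n. (1 / real n) *\<^sub>R df i xs)"
      using pp by (intro sum.cong refl) (auto dest: pp)
    also have "\<dots> = 0" by (simp add: scaleR_sum_right[symmetric] grad0)
    finally show ?thesis .
  qed
  have sig_eq: "sigAS = (\<Sum>C\<in>set_pmf S. pmf S C * (norm (g C xs))\<^sup>2)"
    unfolding sigAS_def g_def ..
  have nexp: "(norm (u - \<gamma> *\<^sub>R v))\<^sup>2 = (norm u)\<^sup>2 - 2 * \<gamma> * inner u v + \<gamma>\<^sup>2 * (norm v)\<^sup>2" for u v :: 'a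
  proof -
    have "(norm (u - \<gamma> *\<^sub>R v))\<^sup>2 = inner (u - \<gamma> *\<^sub>R v) (u - \<gamma> *\<^sub>R v)" by (rule power2_norm_eq_inner)
    also have "\<dots> = inner u u - 2 * \<gamma> * inner u v + \<gamma>\<^sup>2 * inner v v"
      by (simp add: inner_diff_left inner_diff_right inner_commute[of v u] power2_eq_square algebra_simps)
    also have "\<dots> = (norm u)\<^sup>2 - 2 * \<gamma> * inner u v + \<gamma>\<^sup>2 * (norm v)\<^sup>2" by (simp add: power2_norm_eq_inner)
    finally show ?thesis .
  qed
  have inner_step: "measure_pmf.expectation S (\<lambda>C. (norm (prox \<gamma> (fC n p f C) x - xs))\<^sup>2)
      \<le> q * ((norm (x - xs))\<^sup>2 + \<gamma>\<^sup>2 * sigAS)" for x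
  proof -
    have "measure_pmf.expectation S (\<lambda>C. (norm (prox \<gamma> (fC n p f C) x - xs))\<^sup>2)
        = (\<Sum>C\<in>set_pmf S. (norm (prox \<gamma> (fC n p f C) x - xs))\<^sup>2 * pmf S C)"
      using finS by (intro integral_measure_pmf_real) auto
    also have "\<dots> \<le> (\<Sum>C\<in>set_pmf S. (q * (norm ((x - xs) - \<gamma> *\<^sub>R g C xs))\<^sup>2) * pmf S C)"
      by (intro sum_mono mult_right_mono step) auto
    also have "\<dots> = (\<Sum>C\<in>set_pmf S. q * (pmf S C * (norm (x - xs))\<^sup>2
        - 2 * \<gamma> * inner (x - xs) (pmf S C *\<^sub>R g C xs) + \<gamma>\<^sup>2 * (pmf S C * (norm (g C xs))\<^sup>2)))"
      by (intro sum.cong refl) (simp only: nexp, simp add: algebra_simps)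
    also have "\<dots> = q * ((norm (x - xs))\<^sup>2 * (\<Sum>C\<in>set_pmf S. pmf S C)
        - 2 * \<gamma> * inner (x - xs) (\<Sum>C\<in>set_pmf S. pmf S C *\<^sub>R g C xs)
        + \<gamma>\<^sup>2 * (\<Sum>C\<in>set_pmf S. pmf S C * (norm (g C xs))\<^sup>2))"
      by (simp add: inner_sum_right sum_distrib_left sum_distrib_right sum.distrib sum_subtractf algebra_simps)
    also have "\<dots> = q * ((norm (x - xs))\<^sup>2 + \<gamma>\<^sup>2 * sigAS)"
      using finS by (simp add: Eg0 sig_eq[symmetric] sum_pmf_eq_1)
    finally show ?thesis .
  qed
  have finP: "finite (set_pmf (P k))" for k
    by (induction k) (auto simp: P_def finS)
  have rec: "E (P (Suc k)) \<le> q * (E (P k) + \<gamma>\<^sup>2 * sigAS)" for k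
  proof -
    have "E (P (Suc k)) = (\<Sum>a\<in>set_pmf (P k). pmf (P k) a *\<^sub>R
        measure_pmf.expectation (map_pmf (\<lambda>C. prox \<gamma> (fC n p f C) a) S) (\<lambda>x. (norm (x - xs))\<^sup>2))"
      unfolding E_def P_def sppm_as.simps
      by (rule pmf_expectation_bind) (use finP[of k] finS in \<open>auto simp: P_def\<close>)
    also have "\<dots> = (\<Sum>a\<in>set_pmf (P k). pmf (P k) a *
        measure_pmf.expectation S (\<lambda>C. (norm (prox \<gamma> (fC n p f C) a - xs))\<^sup>2))"
      by (simp add: integral_map_pmf)
    also have "\<dots> \<le> (\<Sum>a\<in>set_pmf (P k). pmf (P k) a * (q * ((norm (a - xs))\<^sup>2 + \<gamma>\<^sup>2 * sigAS)))"
      by (intro sum_mono mult_left_mono inner_step) auto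
    also have "\<dots> = q * ((\<Sum>a\<in>set_pmf (P k). (norm (a - xs))\<^sup>2 * pmf (P k) a)
        + \<gamma>\<^sup>2 * sigAS * (\<Sum>a\<in>set_pmf (P k). pmf (P k) a))"
      by (simp add: sum_distrib_left sum_distrib_right sum.distrib algebra_simps)
    also have "\<dots> = q * (E (P k) + \<gamma>\<^sup>2 * sigAS)"
      using finP[of k] unfolding E_def
      by (simp add: sum_pmf_eq_1 integral_measure_pmf_real[of "set_pmf (P k)"])
    finally show ?thesis .
  qed
  have sig_nn: "sigAS \<ge> 0" unfolding sigAS_def by (intro sum_nonneg) auto
  define B where "B = \<gamma>\<^sup>2 * sigAS * q / (1 - q)"
  have B_nn: "B \<ge> 0" unfolding B_def using qpos qlt sig_nn by simp
  have Bfix: "q * (B + \<gamma>\<^sup>2 * sigAS) = B"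
    unfolding B_def using qlt by (simp add: field_simps)
  have main: "E (P k) \<le> q ^ k * (norm (x0 - xs))\<^sup>2 + B" for k
  proof (induction k)
    case 0
    show ?case using B_nn by (simp add: E_def P_def)
  next
    case (Suc k)
    have "E (P (Suc k)) \<le> q * (E (P k) + \<gamma>\<^sup>2 * sigAS)" by (rule rec)
    also have "\<dots> \<le> q * (q ^ k * (norm (x0 - xs))\<^sup>2 + B + \<gamma>\<^sup>2 * sigAS)"
      using Suc qpos by (intro mult_left_mono) auto
    also have "\<dots> = q ^ Suc k * (norm (x0 - xs))\<^sup>2 + q * (B + \<gamma>\<^sup>2 * sigAS)"
      by (simp add: algebra_simps)
    also have "\<dots> = q ^ Suc k * (norm (x0 - xs))\<^sup>2 + B" using Bfix by simp
    finally show ?case .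
  qed
  have qk: "q ^ k = (1 / (1 + \<gamma> * muAS)) ^ (2 * k)" unfolding q_def by (simp add: power_mult)
  have Beq: "B = \<gamma> * sigAS / (\<gamma> * muAS\<^sup>2 + 2 * muAS)"
  proof -
    have a: "1 + \<gamma> * muAS > 0" using muAS_pos gamma_pos by (simp add: add_pos_pos)
    have b: "\<gamma> * muAS\<^sup>2 + 2 * muAS > 0" using muAS_pos gamma_pos by (simp add: add_pos_pos)
    define t where "t = (1 + \<gamma> * muAS)\<^sup>2"
    have t2: "t - 1 = \<gamma> * (\<gamma> * muAS\<^sup>2 + 2 * muAS)" unfolding t_def by (simp add: power2_eq_square algebra_simps)
    have tp: "t - 1 > 0" using t2 b gamma_pos by simp
    have qt: "q = 1 / t" unfolding q_def t_def by (simp add: power_divide)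
    have "q / (1 - q) = 1 / (t - 1)" using tp unfolding qt by (simp add: field_simps)
    hence "B = \<gamma>\<^sup>2 * sigAS / (\<gamma> * (\<gamma> * muAS\<^sup>2 + 2 * muAS))" unfolding B_def t2[symmetric]
      by (metis times_divide_eq_right mult.right_neutral)
    thus ?thesis using gamma_pos by (simp add: power2_eq_square)
  qed
  have final: "E (P k) \<le> (1 / (1 + \<gamma> * muAS)) ^ (2 * k) * (norm (x0 - xs))\<^sup>2
          + \<gamma> * sigAS / (\<gamma> * muAS\<^sup>2 + 2 * muAS)"
    using main[of k] qk Beq by simp
  show ?thesis
    unfolding Let_def p_def[symmetric] muAS_def[symmetric] sigAS_def[symmetric]
    using final unfolding E_def P_def .
qed

end
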